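(* Let $\lambda=(\lambda_1,\dots,\lambda_I)$, $\mu=(\mu_1,\dots,\mu_J)$ be partitions of $n$. Let $(\sigma_t)_{t\ge0}$ be the random transpositions random walk on $S_n$, i.e. the Markov chain with transition matrix $P(x,y)=Q(yx^{-1})$ where $Q(\sigma)=2/n^2$ if $\sigma$ is a transposition, $Q(\mathrm{id})=1/n$, and $Q(\sigma)=0$ otherwise. Then, for any initial distribution, the process $(T^{\sigma_t})_{t\ge0}$ on $\mathcal{T}_{\lambda,\mu}$ is a Markov chain, and its transition matrix is the random transpositions chain on $\mathcal{T}_{\lambda,\mu}$ defined in the context: $P(T,T')=\frac{2T_{i_1j_1}T_{i_2j_2}}{n^2}$ if $T'=F_{(i_1,j_1),(i_2,j_2)}(T)\ne T$, $P(T,T)$ the remaining mass, and $0$ otherwise.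
   Context: $\mathcal{T}_{\lambda,\mu}$ is the set of $I\times J$ nonnegative integer tables with row sums $\lambda_i$ and column sums $\mu_j$. Let $L_1=\{1,\dots,\lambda_1\}$, $L_2=\{\lambda_1+1,\dots,\lambda_1+\lambda_2\}$, …, $L_I=\{n-\lambda_I+1,\dots,n\}$, and define $M_1,\dots,M_J$ from $\mu$ in the same way. For $x\in S_n$, $T^x\in\mathcal{T}_{\lambda,\mu}$ is the table with $T^x_{ij}=\#\{\ell\in L_i: x(\ell)\in M_j\}$ (this map identifies $\mathcal{T}_{\lambda,\mu}$ with the double cosets $S_\lambda\backslash S_n/S_\mu$ of Young subgroups). For $i_1\ne i_2$, $j_1\ne j_2$, $F_{(i_1,j_1),(i_2,j_2)}(T)$ is obtained from $T$ by subtracting $1$ at $(i_1,j_1)$ and $(i_2,j_2)$ and adding $1$ at $(i_1,j_2)$ and $(i_2,j_1)$. *)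

theory Defs
  imports "HOL-Combinatorics.Combinatorics" Complex_Main
begin

definition is_partition :: "nat \<Rightarrow> nat list \<Rightarrow> bool" where
  "is_partition n lam \<longleftrightarrow> sum_list lam = n \<and> (\<forall>k\<in>set lam. 0 < k) \<and> sorted_wrt (\<ge>) lam"

text \<open>Block i (0-based index, i < length lam) of {1..n}: L_(i+1) in the paper.\<close>
definition block :: "nat list \<Rightarrow> nat \<Rightarrow> nat set" where
  "block lam i = {sum_list (take i lam) + 1 .. sum_list (take i lam) + lam ! i}"

text \<open>Contingency tables with row sums lam and column sums mu (0-based indices, zero outside).\<close>
definition tables :: "nat list \<Rightarrow> nat list \<Rightarrow> (nat \<Rightarrow> nat \<Rightarrow> nat) set" where
  "tables lam mu = {T. (\<forall>i j. (length lam \<le> i \<or> length mu \<le> j) \<longrightarrow> T i j = 0)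
      \<and> (\<forall>i < length lam. (\<Sum>j<length mu. T i j) = lam ! i)
      \<and> (\<forall>j < length mu. (\<Sum>i<length lam. T i j) = mu ! j)}"

definition table_of :: "nat list \<Rightarrow> nat list \<Rightarrow> (nat \<Rightarrow> nat) \<Rightarrow> nat \<Rightarrow> nat \<Rightarrow> nat" where
  "table_of lam mu x i j =
     (if i < length lam \<and> j < length mu then card {l \<in> block lam i. x l \<in> block mu j} else 0)"

definition Fmove :: "nat \<times> nat \<Rightarrow> nat \<times> nat \<Rightarrow> (nat \<Rightarrow> nat \<Rightarrow> nat) \<Rightarrow> nat \<Rightarrow> nat \<Rightarrow> nat" where
  "Fmove c1 c2 T = (\<lambda>i j.
     if (i, j) = c1 \<or> (i, j) = c2 then T i j - 1
     else if (i, j) = (fst c1, snd c2) \<or> (i, j) = (fst c2, snd c1) then T i j + 1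
     else T i j)"

definition rt_Q :: "nat \<Rightarrow> (nat \<Rightarrow> nat) \<Rightarrow> real" where
  "rt_Q n \<sigma> = (if \<exists>a b. a \<in> {1..n} \<and> b \<in> {1..n} \<and> a \<noteq> b \<and> \<sigma> = transpose a b then 2 / real n ^ 2
              else if \<sigma> = id then 1 / real n else 0)"

definition rt_P :: "nat \<Rightarrow> (nat \<Rightarrow> nat) \<Rightarrow> (nat \<Rightarrow> nat) \<Rightarrow> real" where
  "rt_P n x y = rt_Q n (y \<circ> inv x)"

definition is_move :: "nat list \<Rightarrow> nat list \<Rightarrow> (nat \<Rightarrow> nat \<Rightarrow> nat) \<Rightarrow> (nat \<Rightarrow> nat \<Rightarrow> nat)
    \<Rightarrow> nat \<Rightarrow> nat \<Rightarrow> nat \<Rightarrow> nat \<Rightarrow> bool" where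
  "is_move lam mu T T' i1 j1 i2 j2 \<longleftrightarrow>
     i1 < length lam \<and> i2 < length lam \<and> j1 < length mu \<and> j2 < length mu \<and>
     i1 \<noteq> i2 \<and> j1 \<noteq> j2 \<and> 0 < T i1 j1 \<and> 0 < T i2 j2 \<and> T' = Fmove (i1, j1) (i2, j2) T"

definition table_K_off :: "nat list \<Rightarrow> nat list \<Rightarrow> (nat \<Rightarrow> nat \<Rightarrow> nat) \<Rightarrow> (nat \<Rightarrow> nat \<Rightarrow> nat) \<Rightarrow> real" where
  "table_K_off lam mu T T' =
     (if T' \<noteq> T \<and> (\<exists>i1 j1 i2 j2. is_move lam mu T T' i1 j1 i2 j2)
      then (SOME v. \<exists>i1 j1 i2 j2. is_move lam mu T T' i1 j1 i2 j2 \<and>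
                   v = 2 * real (T i1 j1) * real (T i2 j2) / real (sum_list lam) ^ 2)
      else 0)"

definition table_K :: "nat list \<Rightarrow> nat list \<Rightarrow> (nat \<Rightarrow> nat \<Rightarrow> nat) \<Rightarrow> (nat \<Rightarrow> nat \<Rightarrow> nat) \<Rightarrow> real" where
  "table_K lam mu T T' =
     (if T' = T then 1 - (\<Sum>T''\<in>tables lam mu - {T}. table_K_off lam mu T T'')
      else table_K_off lam mu T T')"

end

theory Submission
  imports Defs
begin

lemma sum_take_le: "sum_list (take k (xs::nat list)) \<le> sum_list xs"
proof -
  have "sum_list xs = sum_list (take k xs) + sum_list (drop k xs)"
    by (metis append_take_drop_id sum_list_append)
  then show ?thesis by linarith
qed

lemma sum_take_mono: "k \<le> k' \<Longrightarrow> sum_list (take k (xs::nat list)) \<le> sum_list (take k' xs)"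
  by (metis min.absorb1 sum_take_le take_take)

lemma sum_take_Suc: "i < length xs \<Longrightarrow> sum_list (take (Suc i) (xs::nat list)) = sum_list (take i xs) + xs ! i"
  by (simp add: take_Suc_conv_app_nth)

lemma block_sub: "i < length lam \<Longrightarrow> block lam i \<subseteq> {1..sum_list lam}"
  using sum_take_le[of "Suc i" lam] sum_take_Suc[of i lam]
  by (auto simp: block_def)

lemma block_disj: "i < length lam \<Longrightarrow> i' < length lam \<Longrightarrow> l \<in> block lam i \<Longrightarrow> l \<in> block lam i' \<Longrightarrow> i = i'"
proof (rule ccontr)
  assume a: "i < length lam" "i' < length lam" "l \<in> block lam i" "l \<in> block lam i'" "i \<noteq> i'"
  { fix p q assume pq: "p < q" "q < length lam" "l \<in> block lam p" "l \<in> block lam q"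
    have "sum_list (take (Suc p) lam) \<le> sum_list (take q lam)" using pq by (intro sum_take_mono) auto
    with sum_take_Suc[of p lam] pq have False by (auto simp: block_def) }
  with a show False by (metis linorder_neqE_nat)
qed

lemma block_cover: "l \<in> {1..sum_list lam} \<Longrightarrow> \<exists>i < length lam. l \<in> block lam i"
proof (induction lam arbitrary: l)
  case Nil then show ?case by simp
next
  case (Cons a lam)
  show ?case
  proof (cases "l \<le> a")
    case True
    then show ?thesis using Cons.prems by (intro exI[of _ 0]) (auto simp: block_def)
  next
    case False
    then have "l - a \<in> {1..sum_list lam}" using Cons.prems by auto
    from Cons.IH[OF this] obtain i where "i < length lam" "l - a \<in> block lam i" by blast
    then show ?thesis using False by (intro exI[of _ "Suc i"]) (auto simp: block_def)
  qed
qed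

lemma card_block: "card (block lam i) = lam ! i"
  by (simp add: block_def)

lemma finite_block: "finite (block lam i)"
  by (simp add: block_def)



lemma transpose_eq:
  assumes "a \<noteq> b" "transpose a b = transpose c d"
  shows "(a = c \<and> b = d) \<or> (a = d \<and> b = c)"
proof -
  have 1: "transpose c d a = b" using assms by (metis transpose_apply_first)
  have 2: "transpose c d b = a" using assms by (metis transpose_apply_second)
  show ?thesis using 1 2 assms(1) by (auto simp: transpose_def split: if_splits)
qed


lemma transpose_ne_id: "a \<noteq> b \<Longrightarrow> transpose a b \<noteq> id"
  by (metis id_apply transpose_apply_first)

lemma card_U:
  "2 * card {(a,b). a \<in> {1..n::nat} \<and> b \<in> {1..n} \<and> a < b} + n = n * n"
proof -
  define U where "U = {(a,b). a \<in> {1..n::nat} \<and> b \<in> {1..n} \<and> a < b}"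
  define U' where "U' = {(a,b). a \<in> {1..n::nat} \<and> b \<in> {1..n} \<and> b < a}"
  define Dg where "Dg = {(a,b). a \<in> {1..n::nat} \<and> b \<in> {1..n} \<and> a = b}"
  have D: "{1..n} \<times> {1..n} = U \<union> U' \<union> Dg" unfolding U_def U'_def Dg_def by auto
  have sub: "U \<subseteq> {1..n} \<times> {1..n}" "U' \<subseteq> {1..n} \<times> {1..n}" "Dg \<subseteq> {1..n} \<times> {1..n}"
    unfolding U_def U'_def Dg_def by auto
  have f1: "finite U" by (rule finite_subset[OF sub(1)]) simp
  have f2: "finite U'" by (rule finite_subset[OF sub(2)]) simp
  have f3: "finite Dg" by (rule finite_subset[OF sub(3)]) simp
  note fin = f1 f2 f3
  have c1: "card ({1..n} \<times> {1..n}) = card (U \<union> U') + card Dg"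
    unfolding D by (rule card_Un_disjoint) (use fin in \<open>auto simp: U_def U'_def Dg_def\<close>)
  have c2: "card (U \<union> U') = card U + card U'"
    by (rule card_Un_disjoint) (use fin in \<open>auto simp: U_def U'_def\<close>)
  have e3: "U' = prod.swap ` U" unfolding U_def U'_def by auto
  have c3: "card U' = card U" unfolding e3 by (rule card_image[OF inj_swap])
  have e4: "Dg = (\<lambda>a. (a,a)) ` {1..n}" unfolding Dg_def by auto
  have c4: "card Dg = n" unfolding e4 by (subst card_image) (auto simp: inj_on_def)
  have "card ({1..n} \<times> {1..n}) = n * n" by simp
  then have "2 * card U + n = n * n" using c1 c2 c3 c4 by linarith
  then show ?thesis unfolding U_def .
qed

lemma sumQ:
  assumes n1: "1 \<le> n"
  shows "(\<Sum>\<sigma>\<in>{y. y permutes {1..n}}. rt_Q n \<sigma>) = 1"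
proof -
  define Tr where "Tr = {\<sigma>. \<exists>a b. a \<in> {1..n} \<and> b \<in> {1..n} \<and> a \<noteq> b \<and> \<sigma> = transpose a b}"
  define U where "U = {(a,b). a \<in> {1..n::nat} \<and> b \<in> {1..n} \<and> a < b}"
  have finP: "finite {y. y permutes {1..n}}" by (rule finite_permutations) simp
  have TrP: "Tr \<union> {id} \<subseteq> {y. y permutes {1..n}}"
  proof
    fix \<sigma> assume "\<sigma> \<in> Tr \<union> {id}"
    then consider "\<sigma> = id" | "\<sigma> \<in> Tr" by blast
    then show "\<sigma> \<in> {y. y permutes {1..n}}"
    proof cases
      case 1 then show ?thesis by (simp add: permutes_id)
    next
      case 2
      then obtain a b where "a \<in> {1..n}" "b \<in> {1..n}" "\<sigma> = transpose a b" unfolding Tr_def mem_Collect_eq by blast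
      then show ?thesis using permutes_swap_id[of a "{1..n}" b] by simp
    qed
  qed
  have idTr: "id \<notin> Tr"
  proof
    assume "id \<in> Tr"
    then obtain a b :: nat where "a \<noteq> b" "id = transpose a b" unfolding Tr_def mem_Collect_eq by blast
    then show False using transpose_ne_id[of a b] by simp
  qed
  have s1: "(\<Sum>\<sigma>\<in>{y. y permutes {1..n}}. rt_Q n \<sigma>) = (\<Sum>\<sigma>\<in>Tr \<union> {id}. rt_Q n \<sigma>)"
  proof (rule sum.mono_neutral_right[OF finP TrP])
    show "\<forall>i\<in>{y. y permutes {1..n}} - (Tr \<union> {id}). rt_Q n i = 0"
    proof
      fix \<sigma> assume s: "\<sigma> \<in> {y. y permutes {1..n}} - (Tr \<union> {id})"
      then have h1: "\<not> (\<exists>a b. a \<in> {1..n} \<and> b \<in> {1..n} \<and> a \<noteq> b \<and> \<sigma> = transpose a b)"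
        unfolding Tr_def mem_Collect_eq by blast
      have h2: "\<sigma> \<noteq> id" using s by blast
      show "rt_Q n \<sigma> = 0" unfolding rt_Q_def by (simp only: if_not_P[OF h1] if_not_P[OF h2])
    qed
  qed
  have s2: "(\<Sum>\<sigma>\<in>Tr \<union> {id}. rt_Q n \<sigma>) = (\<Sum>\<sigma>\<in>Tr. rt_Q n \<sigma>) + rt_Q n id"
    using idTr finite_subset[OF _ finP, of Tr] TrP by (subst sum.union_disjoint) auto
  have s3: "(\<Sum>\<sigma>\<in>Tr. rt_Q n \<sigma>) = (\<Sum>\<sigma>\<in>Tr. 2 / real n ^ 2)"
  proof (rule sum.cong[OF refl])
    fix \<sigma> assume "\<sigma> \<in> Tr"
    then have h: "\<exists>a b. a \<in> {1..n} \<and> b \<in> {1..n} \<and> a \<noteq> b \<and> \<sigma> = transpose a b"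
      unfolding Tr_def mem_Collect_eq by blast
    show "rt_Q n \<sigma> = 2 / real n ^ 2" unfolding rt_Q_def by (simp only: if_P[OF h])
  qed
  have s4: "rt_Q n id = 1 / real n"
  proof -
    have h: "\<not> (\<exists>a b. a \<in> {1..n} \<and> b \<in> {1..n} \<and> a \<noteq> b \<and> id = transpose a b)"
      using transpose_ne_id by metis
    show ?thesis unfolding rt_Q_def by (simp only: if_not_P[OF h]) simp
  qed
  have TrU: "Tr = (\<lambda>(a,b). transpose a b) ` U"
  proof (intro equalityI subsetI)
    fix \<sigma> assume "\<sigma> \<in> Tr"
    then obtain a b where ab: "a \<in> {1..n}" "b \<in> {1..n}" "a \<noteq> b" "\<sigma> = transpose a b" unfolding Tr_def mem_Collect_eq by blast
    show "\<sigma> \<in> (\<lambda>(a,b). transpose a b) ` U"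
    proof (cases "a < b")
      case True then show ?thesis using ab unfolding U_def by auto
    next
      case False
      then have "(b,a) \<in> U" using ab unfolding U_def by auto
      moreover have "\<sigma> = (\<lambda>(a,b). transpose a b) (b,a)" using ab by (simp add: transpose_commute)
      ultimately show ?thesis by blast
    qed
  next
    fix \<sigma> assume "\<sigma> \<in> (\<lambda>(a,b). transpose a b) ` U"
    then show "\<sigma> \<in> Tr" unfolding U_def Tr_def by auto
  qed
  have cTr: "card ((\<lambda>(a,b). transpose a b) ` U) = card U"
  proof (rule card_image, rule inj_onI)
    fix p q assume "p \<in> U" "q \<in> U" "(\<lambda>(a,b). transpose a b) p = (\<lambda>(a,b). transpose a b) q"
    then obtain a b c d where abcd: "p = (a,b)" "q = (c,d)" "a < b" "c < d" "transpose a b = transpose c d"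
      unfolding U_def by auto
    then have "a \<noteq> b" by simp
    from transpose_eq[OF this abcd(5)] abcd(3,4) have "a = c" "b = d" by auto
    then show "p = q" using abcd(1,2) by simp
  qed
  have e: "(\<Sum>\<sigma>\<in>{y. y permutes {1..n}}. rt_Q n \<sigma>) = real (card U) * (2 / real n ^ 2) + 1 / real n"
    using s1 s2 s3 s4 cTr unfolding TrU by simp
  have h: "2 * card U + n = n * n" using card_U[of n] unfolding U_def .
  have "real (2 * card U + n) = real (n * n)" by (simp only: h)
  then have cu: "2 * real (card U) = real n * real n - real n" by simp
  have "real n > 0" using n1 by simp
  then show ?thesis unfolding e using cu by (simp add: field_simps power2_eq_square)
qed

context
  fixes n :: nat and lam mu :: "nat list"
  assumes sl: "sum_list lam = n" and sm: "sum_list mu = n"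
begin

lemma cells_disj: "\<forall>j\<in>{..<length mu}. \<forall>j'\<in>{..<length mu}. j \<noteq> j' \<longrightarrow> {l\<in>A. x l \<in> block mu j} \<inter> {l\<in>A. x l \<in> block mu j'} = {}"
  "\<forall>i\<in>{..<length lam}. \<forall>i'\<in>{..<length lam}. i \<noteq> i' \<longrightarrow> {l\<in>block lam i. P l} \<inter> {l\<in>block lam i'. P l} = {}"
  using block_disj[of _ mu] block_disj[of _ lam] by blast+

lemma union_blocks: "(\<Union>i<length lam. block lam i) = {1..n}"
  using block_sub[of _ lam] block_cover[of _ lam] sl by blast

lemma union_blocks_mu: "(\<Union>j<length mu. block mu j) = {1..n}"
  using block_sub[of _ mu] block_cover[of _ mu] sm by blast

lemma table_in_tables:
  assumes x: "x permutes {1..n}"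
  shows "table_of lam mu x \<in> tables lam mu"
proof -
  have row: "(\<Sum>j<length mu. table_of lam mu x i j) = lam ! i" if i: "i < length lam" for i
  proof -
    have "(\<Sum>j<length mu. table_of lam mu x i j) = (\<Sum>j<length mu. card {l \<in> block lam i. x l \<in> block mu j})"
      using i by (auto simp: table_of_def)
    also have "\<dots> = card (\<Union>j<length mu. {l \<in> block lam i. x l \<in> block mu j})"
      by (rule card_UN_disjoint[symmetric]) (simp_all add: finite_block cells_disj)
    also have "(\<Union>j<length mu. {l \<in> block lam i. x l \<in> block mu j}) = block lam i"
    proof -
      have xin: "x l \<in> {1..n}" if "l \<in> block lam i" for l
        using block_sub[OF i] sl that permutes_in_image[OF x] by blast
      show ?thesis
      proof (intro equalityI subsetI)
        fix l assume "l \<in> (\<Union>j<length mu. {l \<in> block lam i. x l \<in> block mu j})"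
        then show "l \<in> block lam i" by auto
      next
        fix l assume l: "l \<in> block lam i"
        then have "x l \<in> (\<Union>j<length mu. block mu j)" using union_blocks_mu xin by simp
        then obtain j where "j<length mu" "x l \<in> block mu j" by auto
        then show "l \<in> (\<Union>j<length mu. {l \<in> block lam i. x l \<in> block mu j})" using l by auto
      qed
    qed
    finally show ?thesis by (simp add: card_block)
  qed
  have col: "(\<Sum>i<length lam. table_of lam mu x i j) = mu ! j" if j: "j < length mu" for j
  proof -
    have "(\<Sum>i<length lam. table_of lam mu x i j) = (\<Sum>i<length lam. card {l \<in> block lam i. x l \<in> block mu j})"
      using j by (auto simp: table_of_def)
    also have "\<dots> = card (\<Union>i<length lam. {l \<in> block lam i. x l \<in> block mu j})"
      by (rule card_UN_disjoint[symmetric]) (simp_all add: finite_block cells_disj)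
    also have "(\<Union>i<length lam. {l \<in> block lam i. x l \<in> block mu j}) = {l \<in> {1..n}. x l \<in> block mu j}"
    proof (intro equalityI subsetI)
      fix l assume "l \<in> (\<Union>i<length lam. {l \<in> block lam i. x l \<in> block mu j})"
      then show "l \<in> {l \<in> {1..n}. x l \<in> block mu j}" using union_blocks by auto
    next
      fix l assume l: "l \<in> {l \<in> {1..n}. x l \<in> block mu j}"
      then have "l \<in> (\<Union>i<length lam. block lam i)" using union_blocks by simp
      then obtain i where "i<length lam" "l \<in> block lam i" by auto
      then show "l \<in> (\<Union>i<length lam. {l \<in> block lam i. x l \<in> block mu j})" using l by auto
    qed
    also have "card \<dots> = card (x ` {l \<in> {1..n}. x l \<in> block mu j})"
      by (rule card_image[symmetric]) (meson inj_on_subset permutes_inj[OF x] subset_UNIV)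
    also have "x ` {l \<in> {1..n}. x l \<in> block mu j} = block mu j"
    proof -
      have "block mu j \<subseteq> {1..n}" using block_sub[OF j] sm by simp
      show ?thesis
      proof (intro equalityI subsetI)
        fix m assume "m \<in> x ` {l \<in> {1..n}. x l \<in> block mu j}"
        then show "m \<in> block mu j" by auto
      next
        fix m assume m: "m \<in> block mu j"
        then have "m \<in> x ` {1..n}" using permutes_image[OF x] \<open>block mu j \<subseteq> {1..n}\<close> by auto
        then obtain l where "l \<in> {1..n}" "m = x l" by auto
        then show "m \<in> x ` {l \<in> {1..n}. x l \<in> block mu j}" using m by auto
      qed
    qed
    finally show ?thesis by (simp add: card_block)
  qed
  show ?thesis unfolding tables_def using row col by (auto simp: table_of_def)
qed

lemma finite_tables: "finite (tables lam mu)"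
proof -
  define B where "B = {0..<length lam} \<times> {0..<length mu}"
  define h where "h = (\<lambda>f::nat\<times>nat\<Rightarrow>nat. \<lambda>i j. if (i,j) \<in> B then f (i,j) else 0)"
  have "tables lam mu \<subseteq> h ` (B \<rightarrow>\<^sub>E {0..n})"
  proof
    fix T assume T: "T \<in> tables lam mu"
    have le: "T i j \<le> n" if "(i,j) \<in> B" for i j
    proof -
      have i: "i < length lam" and j: "j < length mu" using that by (auto simp: B_def)
      have "T i j \<le> (\<Sum>j<length mu. T i j)" using j by (intro member_le_sum) auto
      also have "\<dots> = lam ! i" using T i by (auto simp: tables_def)
      also have "\<dots> \<le> n" using sl i by (metis elem_le_sum_list)
      finally show ?thesis .
    qed
    have "T = h (restrict (\<lambda>(i,j). T i j) B)"
      using T by (auto simp: h_def tables_def B_def fun_eq_iff)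
    moreover have "restrict (\<lambda>(i,j). T i j) B \<in> B \<rightarrow>\<^sub>E {0..n}" using le by auto
    ultimately show "T \<in> h ` (B \<rightarrow>\<^sub>E {0..n})" by blast
  qed
  moreover have "finite (B \<rightarrow>\<^sub>E {0..n})" by (intro finite_PiE) (auto simp: B_def)
  ultimately show ?thesis by (meson finite_imageI finite_subset)
qed


lemma card_split2:
  assumes "finite A" "p \<noteq> q"
  shows "card {l\<in>A. P l} = card {l\<in>A-{p,q}. P l} + of_bool (p\<in>A \<and> P p) + of_bool (q\<in>A \<and> P q)"
proof -
  have e: "{l\<in>A. P l} = {l\<in>A-{p,q}. P l} \<union> {l\<in>{p}. l\<in>A \<and> P l} \<union> {l\<in>{q}. l\<in>A \<and> P l}" by auto
  have "card {l\<in>A. P l} = card ({l\<in>A-{p,q}. P l} \<union> {l\<in>{p}. l\<in>A \<and> P l}) + card {l\<in>{q}. l\<in>A \<and> P l}"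
    unfolding e by (rule card_Un_disjoint) (use assms in auto)
  also have "card ({l\<in>A-{p,q}. P l} \<union> {l\<in>{p}. l\<in>A \<and> P l}) = card {l\<in>A-{p,q}. P l} + card {l\<in>{p}. l\<in>A \<and> P l}"
    by (rule card_Un_disjoint) (use assms in auto)
  also have "card {l\<in>{p}. l\<in>A \<and> P l} = of_bool (p\<in>A \<and> P p)"
    proof -
      have "{l\<in>{p}. l\<in>A \<and> P l} = (if p\<in>A \<and> P p then {p} else {})" by auto
      then show ?thesis by simp
    qed
  also have "card {l\<in>{q}. l\<in>A \<and> P l} = of_bool (q\<in>A \<and> P q)"
    proof -
      have "{l\<in>{q}. l\<in>A \<and> P l} = (if q\<in>A \<and> P q then {q} else {})" by auto
      then show ?thesis by simp
    qed
  finally show ?thesis .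
qed

lemma tab_swap:
  assumes x: "x permutes {1..n}" and la: "la \<in> block lam ia" and lb: "lb \<in> block lam ib"
    and xa: "x la \<in> block mu ja" and xb: "x lb \<in> block mu jb" and ne: "la \<noteq> lb"
    and ia: "ia < length lam" and ib: "ib < length lam" and ja: "ja < length mu" and jb: "jb < length mu"
  shows "table_of lam mu (transpose (x la) (x lb) \<circ> x) i j + of_bool ((i,j)=(ia,ja)) + of_bool ((i,j)=(ib,jb))
       = table_of lam mu x i j + of_bool ((i,j)=(ia,jb)) + of_bool ((i,j)=(ib,ja))"
proof (cases "i < length lam \<and> j < length mu")
  case False
  then show ?thesis using ia ib ja jb by (auto simp: table_of_def)
next
  case True
  then have i: "i < length lam" and j: "j < length mu" by auto
  have inj: "inj x" using permutes_inj[OF x] .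
  have xane: "x la \<noteq> x lb" using inj ne by (meson injD)
  have s1: "card {l \<in> block lam i. (transpose (x la) (x lb) \<circ> x) l \<in> block mu j}
      = card {l \<in> block lam i - {la,lb}. (transpose (x la) (x lb) \<circ> x) l \<in> block mu j}
        + of_bool (la \<in> block lam i \<and> x lb \<in> block mu j) + of_bool (lb \<in> block lam i \<and> x la \<in> block mu j)"
    using card_split2[OF finite_block ne, of lam i "\<lambda>l. (transpose (x la) (x lb) \<circ> x) l \<in> block mu j"]
    by simp
  have s2: "card {l \<in> block lam i. x l \<in> block mu j}
      = card {l \<in> block lam i - {la,lb}. x l \<in> block mu j}
        + of_bool (la \<in> block lam i \<and> x la \<in> block mu j) + of_bool (lb \<in> block lam i \<and> x lb \<in> block mu j)"
    using card_split2[OF finite_block ne, of lam i "\<lambda>l. x l \<in> block mu j"] by simp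
  have s3: "{l \<in> block lam i - {la,lb}. (transpose (x la) (x lb) \<circ> x) l \<in> block mu j}
      = {l \<in> block lam i - {la,lb}. x l \<in> block mu j}"
  proof -
    have "(transpose (x la) (x lb) \<circ> x) l = x l" if "l \<notin> {la,lb}" for l
    proof -
      have "x l \<noteq> x la" "x l \<noteq> x lb" using that inj by (auto dest: injD)
      then show ?thesis by (simp add: transpose_apply_other)
    qed
    then show ?thesis by auto
  qed
  have e1: "(la \<in> block lam i) = (i = ia)" using block_disj[OF i ia] la by auto
  have e2: "(lb \<in> block lam i) = (i = ib)" using block_disj[OF i ib] lb by auto
  have e3: "(x la \<in> block mu j) = (j = ja)" using block_disj[OF j ja] xa by auto
  have e4: "(x lb \<in> block mu j) = (j = jb)" using block_disj[OF j jb] xb by auto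
  show ?thesis using i j s1 s2 s3 e1 e2 e3 e4 by (simp add: table_of_def)
qed

lemma tab_pos:
  assumes "la \<in> block lam ia" "x la \<in> block mu ja" "ia < length lam" "ja < length mu"
  shows "0 < table_of lam mu x ia ja"
  using assms by (auto simp: table_of_def card_gt_0_iff finite_block)

lemma tab_swap_same:
  assumes x: "x permutes {1..n}" and la: "la \<in> block lam ia" and lb: "lb \<in> block lam ib"
    and xa: "x la \<in> block mu ja" and xb: "x lb \<in> block mu jb" and ne: "la \<noteq> lb"
    and ia: "ia < length lam" and ib: "ib < length lam" and ja: "ja < length mu" and jb: "jb < length mu"
    and eq: "ia = ib \<or> ja = jb"
  shows "table_of lam mu (transpose (x la) (x lb) \<circ> x) = table_of lam mu x"
proof (intro ext)
  fix i j
  show "table_of lam mu (transpose (x la) (x lb) \<circ> x) i j = table_of lam mu x i j"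
    using tab_swap[OF assms(1-10), of i j] eq by auto
qed

lemma tab_swap_move:
  assumes x: "x permutes {1..n}" and la: "la \<in> block lam ia" and lb: "lb \<in> block lam ib"
    and xa: "x la \<in> block mu ja" and xb: "x lb \<in> block mu jb" and ne: "la \<noteq> lb"
    and ia: "ia < length lam" and ib: "ib < length lam" and ja: "ja < length mu" and jb: "jb < length mu"
    and d: "ia \<noteq> ib" "ja \<noteq> jb"
  shows "table_of lam mu (transpose (x la) (x lb) \<circ> x) = Fmove (ia,ja) (ib,jb) (table_of lam mu x)"
proof (intro ext)
  fix i j
  show "table_of lam mu (transpose (x la) (x lb) \<circ> x) i j = Fmove (ia,ja) (ib,jb) (table_of lam mu x) i j"
    using tab_swap[OF assms(1-10), of i j] d by (auto simp: Fmove_def)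
qed


lemma K_off_val:
  assumes mv: "is_move lam mu T T' i1 j1 i2 j2"
  shows "table_K_off lam mu T T' = 2 * real (T i1 j1) * real (T i2 j2) / real (sum_list lam) ^ 2"
proof -
  have ne: "T' \<noteq> T"
  proof
    assume "T' = T"
    then have "T' i1 j1 = T i1 j1" by simp
    moreover have "T' i1 j1 = T i1 j1 - 1" using mv by (auto simp: is_move_def Fmove_def)
    ultimately show False using mv by (auto simp: is_move_def)
  qed
  have uniq: "v = 2 * real (T i1 j1) * real (T i2 j2) / real (sum_list lam) ^ 2"
    if "is_move lam mu T T' k1 l1 k2 l2" "v = 2 * real (T k1 l1) * real (T k2 l2) / real (sum_list lam) ^ 2"
    for v k1 l1 k2 l2
  proof -
    have F: "Fmove (i1,j1) (i2,j2) T = Fmove (k1,l1) (k2,l2) T" using mv that(1) by (simp add: is_move_def)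
    have c1: "Fmove (k1,l1) (k2,l2) T i1 j1 = T i1 j1 - 1" using F mv
      by (metis (no_types, lifting) Fmove_def)
    have c2: "Fmove (k1,l1) (k2,l2) T i2 j2 = T i2 j2 - 1" using F mv
      by (metis (no_types, lifting) Fmove_def)
    have m1: "(i1,j1) = (k1,l1) \<or> (i1,j1) = (k2,l2)"
      using c1 mv that(1) unfolding is_move_def Fmove_def by (auto split: if_splits)
    have m2: "(i2,j2) = (k1,l1) \<or> (i2,j2) = (k2,l2)"
      using c2 mv that(1) unfolding is_move_def Fmove_def by (auto split: if_splits)
    have "(i1,j1) \<noteq> (i2,j2)" using mv by (auto simp: is_move_def)
    then have "((i1,j1) = (k1,l1) \<and> (i2,j2) = (k2,l2)) \<or> ((i1,j1) = (k2,l2) \<and> (i2,j2) = (k1,l1))"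
      using m1 m2 by auto
    then show ?thesis using that(2) by auto
  qed
  have "(SOME v. \<exists>i1 j1 i2 j2. is_move lam mu T T' i1 j1 i2 j2 \<and>
                   v = 2 * real (T i1 j1) * real (T i2 j2) / real (sum_list lam) ^ 2)
        = 2 * real (T i1 j1) * real (T i2 j2) / real (sum_list lam) ^ 2"
    by (rule some_equality) (use mv uniq in blast)+
  then show ?thesis using ne mv unfolding table_K_off_def by auto
qed

lemma K_off_zero:
  assumes "\<not> (\<exists>i1 j1 i2 j2. is_move lam mu T T' i1 j1 i2 j2)"
  shows "table_K_off lam mu T T' = 0"
  using assms by (simp add: table_K_off_def)



lemma Fmove_unique:
  assumes mv: "is_move lam mu T T' i1 j1 i2 j2" and mv2: "is_move lam mu T T' k1 l1 k2 l2"
  shows "((i1,j1) = (k1,l1) \<and> (i2,j2) = (k2,l2)) \<or> ((i1,j1) = (k2,l2) \<and> (i2,j2) = (k1,l1))"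
proof -
  have F: "Fmove (i1,j1) (i2,j2) T = Fmove (k1,l1) (k2,l2) T" using mv mv2 by (simp add: is_move_def)
  have c1: "Fmove (k1,l1) (k2,l2) T i1 j1 = T i1 j1 - 1" using F mv
    by (metis (no_types, lifting) Fmove_def)
  have c2: "Fmove (k1,l1) (k2,l2) T i2 j2 = T i2 j2 - 1" using F mv
    by (metis (no_types, lifting) Fmove_def)
  have m1: "(i1,j1) = (k1,l1) \<or> (i1,j1) = (k2,l2)"
    using c1 mv mv2 unfolding is_move_def Fmove_def by (auto split: if_splits)
  have m2: "(i2,j2) = (k1,l1) \<or> (i2,j2) = (k2,l2)"
    using c2 mv mv2 unfolding is_move_def Fmove_def by (auto split: if_splits)
  have "(i1,j1) \<noteq> (i2,j2)" using mv by (auto simp: is_move_def)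
  then show ?thesis using m1 m2 by auto
qed

lemma preimage_blocks:
  assumes x: "x permutes {1..n}" and a: "a \<in> {1..n}" and b: "b \<in> {1..n}" and ab: "a \<noteq> b"
  obtains la lb ia ib ja jb where "la \<in> block lam ia" "lb \<in> block lam ib" "x la \<in> block mu ja"
    "x lb \<in> block mu jb" "la \<noteq> lb" "ia < length lam" "ib < length lam" "ja < length mu" "jb < length mu"
    "x la = a" "x lb = b"
proof -
  define la where "la = inv x a"
  define lb where "lb = inv x b"
  have xla: "x la = a" and xlb: "x lb = b" unfolding la_def lb_def by (simp_all add: permutes_inverses(1)[OF x])
  have "la \<in> {1..n}" "lb \<in> {1..n}" unfolding la_def lb_def using permutes_in_image[OF permutes_inv[OF x]] a b by auto
  then obtain ia ib where "ia < length lam" "la \<in> block lam ia" "ib < length lam" "lb \<in> block lam ib"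
    using block_cover[of la lam] block_cover[of lb lam] sl by auto
  moreover obtain ja jb where "ja < length mu" "a \<in> block mu ja" "jb < length mu" "b \<in> block mu jb"
    using block_cover[of a mu] block_cover[of b mu] sm a b by auto
  moreover have "la \<noteq> lb" using xla xlb ab by auto
  ultimately show ?thesis using that xla xlb by auto
qed

lemma lump_off:
  assumes x: "x permutes {1..n}" and ne: "T' \<noteq> table_of lam mu x"
  shows "(\<Sum>y\<in>{y. y permutes {1..n} \<and> table_of lam mu y = T'}. rt_P n x y) = table_K_off lam mu (table_of lam mu x) T'"
proof -
  define T where "T = table_of lam mu x"
  define S where "S = {y. y permutes {1..n} \<and> table_of lam mu y = T'}"
  define Y where "Y = {y. \<exists>a b. a\<in>{1..n} \<and> b\<in>{1..n} \<and> a\<noteq>b \<and> y = transpose a b \<circ> x \<and> table_of lam mu y = T'}"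
  have xi: "x \<circ> inv x = id" "inv x \<circ> x = id" using permutes_inv_o[OF x] by auto
  have finS: "finite S" unfolding S_def by (rule finite_subset[OF _ finite_permutations[of "{1..n}"]]) auto
  have YS: "Y \<subseteq> S"
  proof
    fix y assume "y \<in> Y"
    then obtain a b where ab: "a\<in>{1..n}" "b\<in>{1..n}" "y = transpose a b \<circ> x" "table_of lam mu y = T'"
      unfolding Y_def by blast
    have "y permutes {1..n}" unfolding ab(3)
      by (rule permutes_compose[OF x permutes_swap_id]) (use ab in auto)
    then show "y \<in> S" using ab unfolding S_def by auto
  qed
  have step1: "(\<Sum>y\<in>S. rt_P n x y) = (\<Sum>y\<in>Y. 2 / real n ^ 2)"
  proof (rule sum.mono_neutral_cong_right[OF finS YS])
    show "\<forall>y\<in>S - Y. rt_P n x y = 0"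
    proof
      fix y assume y: "y \<in> S - Y"
      have yy: "y \<circ> inv x \<circ> x = y" using xi by (simp add: o_assoc[symmetric])
      have 1: "\<not> (\<exists>a b. a \<in> {1..n} \<and> b \<in> {1..n} \<and> a \<noteq> b \<and> y \<circ> inv x = transpose a b)"
      proof
        assume "\<exists>a b. a \<in> {1..n} \<and> b \<in> {1..n} \<and> a \<noteq> b \<and> y \<circ> inv x = transpose a b"
        then obtain a b where "a \<in> {1..n}" "b \<in> {1..n}" "a \<noteq> b" "y \<circ> inv x = transpose a b" by blast
        then have "y = transpose a b \<circ> x" using yy by metis
        then show False using y \<open>a \<in> {1..n}\<close> \<open>b \<in> {1..n}\<close> \<open>a \<noteq> b\<close> unfolding Y_def S_def by blast
      qed
      have 2: "y \<circ> inv x \<noteq> id"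
      proof
        assume "y \<circ> inv x = id"
        then have "y = x" using yy by simp
        then show False using y ne unfolding S_def by auto
      qed
      show "rt_P n x y = 0" unfolding rt_P_def rt_Q_def by (simp only: if_not_P[OF 1] if_not_P[OF 2])
    qed
  next
    fix y assume "y \<in> Y"
    then obtain a b where ab: "a\<in>{1..n}" "b\<in>{1..n}" "a \<noteq> b" "y = transpose a b \<circ> x"
      unfolding Y_def by blast
    have "y \<circ> inv x = transpose a b" using ab(4) xi by (metis comp_id o_assoc)
    then have ex: "\<exists>a' b'. a' \<in> {1..n} \<and> b' \<in> {1..n} \<and> a' \<noteq> b' \<and> y \<circ> inv x = transpose a' b'"
      using ab by blast
    show "rt_P n x y = 2 / real n ^ 2" unfolding rt_P_def rt_Q_def by (simp only: if_P[OF ex])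
  qed
  show ?thesis
  proof (cases "\<exists>i1 j1 i2 j2. is_move lam mu T T' i1 j1 i2 j2")
    case False
    have "Y = {}"
    proof (rule ccontr)
      assume "Y \<noteq> {}"
      then obtain y a b where ab: "a\<in>{1..n}" "b\<in>{1..n}" "a \<noteq> b" "y = transpose a b \<circ> x" "table_of lam mu y = T'"
        unfolding Y_def by blast
      obtain la lb ia ib ja jb where p: "la \<in> block lam ia" "lb \<in> block lam ib" "x la \<in> block mu ja"
        "x lb \<in> block mu jb" "la \<noteq> lb" "ia < length lam" "ib < length lam" "ja < length mu" "jb < length mu"
        "x la = a" "x lb = b" by (rule preimage_blocks[OF x ab(1-3)])
      show False
      proof (cases "ia = ib \<or> ja = jb")
        case True
        from tab_swap_same[OF x p(1-9) True] ab p ne show False by simp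
      next
        case c: False
        from tab_swap_move[OF x p(1-9)] c ab p have "T' = Fmove (ia,ja) (ib,jb) T" unfolding T_def by simp
        moreover have "0 < T ia ja" "0 < T ib jb" unfolding T_def using tab_pos p by auto
        ultimately have "is_move lam mu T T' ia ja ib jb" using c p unfolding is_move_def by auto
        then show False using False by blast
      qed
    qed
    then show ?thesis using step1 K_off_zero[OF False] unfolding S_def T_def by simp
  next
    case True
    then obtain i1 j1 i2 j2 where mv: "is_move lam mu T T' i1 j1 i2 j2" by blast
    define C1 where "C1 = {l \<in> block lam i1. x l \<in> block mu j1}"
    define C2 where "C2 = {l \<in> block lam i2. x l \<in> block mu j2}"
    define f where "f = (\<lambda>(l1,l2). transpose (x l1) (x l2) \<circ> x)"
    have mvd: "i1 < length lam" "i2 < length lam" "j1 < length mu" "j2 < length mu" "i1 \<noteq> i2" "j1 \<noteq> j2"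
      "T' = Fmove (i1, j1) (i2, j2) T" using mv unfolding is_move_def by auto
    have cC1: "card C1 = T i1 j1" unfolding C1_def T_def table_of_def using mvd by simp
    have cC2: "card C2 = T i2 j2" unfolding C2_def T_def table_of_def using mvd by simp
    have finC: "finite C1" "finite C2" unfolding C1_def C2_def by (simp_all add: finite_block)
    have inj: "inj_on f (C1 \<times> C2)"
    proof (rule inj_onI)
      fix p q assume p: "p \<in> C1 \<times> C2" and q: "q \<in> C1 \<times> C2" and fpq: "f p = f q"
      obtain l1 l2 where pp: "p = (l1,l2)" by (cases p)
      obtain l1' l2' where qq: "q = (l1',l2')" by (cases q)
      have "transpose (x l1) (x l2) \<circ> x \<circ> inv x = transpose (x l1') (x l2') \<circ> x \<circ> inv x"
        using fpq unfolding pp qq f_def by simp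
      then have te: "transpose (x l1) (x l2) = transpose (x l1') (x l2')" using xi by (simp add: o_assoc[symmetric])
      have m: "x l1 \<in> block mu j1" "x l2 \<in> block mu j2" "x l1' \<in> block mu j1" "x l2' \<in> block mu j2"
        using p q unfolding pp qq C1_def C2_def by auto
      have n12: "x l1 \<noteq> x l2" using m block_disj[OF mvd(3) mvd(4)] mvd(6) by auto
      have nb: "x l1 \<noteq> x l2'" using m block_disj[OF mvd(3) mvd(4)] mvd(6) by metis
      from transpose_eq[OF n12 te] nb have e: "x l1 = x l1'" "x l2 = x l2'" by blast+
      then have "l1 = l1'" "l2 = l2'" by (simp_all add: inj_eq[OF permutes_inj[OF x]])
      then show "p = q" unfolding pp qq by simp
    qed
    have Yeq: "Y = f ` (C1 \<times> C2)"
    proof (intro equalityI subsetI)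
      fix y assume "y \<in> Y"
      then obtain a b where ab: "a\<in>{1..n}" "b\<in>{1..n}" "a \<noteq> b" "y = transpose a b \<circ> x" "table_of lam mu y = T'"
        unfolding Y_def by blast
      obtain la lb ia ib ja jb where p: "la \<in> block lam ia" "lb \<in> block lam ib" "x la \<in> block mu ja"
        "x lb \<in> block mu jb" "la \<noteq> lb" "ia < length lam" "ib < length lam" "ja < length mu" "jb < length mu"
        "x la = a" "x lb = b" by (rule preimage_blocks[OF x ab(1-3)])
      have c: "\<not> (ia = ib \<or> ja = jb)"
      proof
        assume "ia = ib \<or> ja = jb"
        from tab_swap_same[OF x p(1-9) this] ab p ne show False by simp
      qed
      from tab_swap_move[OF x p(1-9)] c ab p have "T' = Fmove (ia,ja) (ib,jb) T" unfolding T_def by simp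
      moreover have "0 < T ia ja" "0 < T ib jb" unfolding T_def using tab_pos p by auto
      ultimately have mv2: "is_move lam mu T T' ia ja ib jb" using c p unfolding is_move_def by auto
      from Fmove_unique[OF mv mv2] show "y \<in> f ` (C1 \<times> C2)"
      proof
        assume "(i1, j1) = (ia, ja) \<and> (i2, j2) = (ib, jb)"
        then have "(la,lb) \<in> C1 \<times> C2" using p unfolding C1_def C2_def by auto
        moreover have "y = f (la,lb)" using ab p unfolding f_def by simp
        ultimately show ?thesis by blast
      next
        assume "(i1, j1) = (ib, jb) \<and> (i2, j2) = (ia, ja)"
        then have "(lb,la) \<in> C1 \<times> C2" using p unfolding C1_def C2_def by auto
        moreover have "y = f (lb,la)" using ab p unfolding f_def by (simp add: transpose_commute)
        ultimately show ?thesis by blast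
      qed
    next
      fix y assume "y \<in> f ` (C1 \<times> C2)"
      then obtain l1 l2 where l: "l1 \<in> C1" "l2 \<in> C2" "y = f (l1,l2)" by auto
      have l1: "l1 \<in> block lam i1" "x l1 \<in> block mu j1" and l2: "l2 \<in> block lam i2" "x l2 \<in> block mu j2"
        using l unfolding C1_def C2_def by auto
      have ne12: "l1 \<noteq> l2" using l1 l2 block_disj[OF mvd(1) mvd(2)] mvd(5) by auto
      have "x l1 \<noteq> x l2" using l1 l2 block_disj[OF mvd(3) mvd(4)] mvd(6) by auto
      moreover have "x l1 \<in> {1..n}" "x l2 \<in> {1..n}"
        using l1 l2 block_sub[OF mvd(1)] block_sub[OF mvd(2)] sl permutes_in_image[OF x] by auto
      moreover have "table_of lam mu y = T'"
        using tab_swap_move[OF x l1(1) l2(1) l1(2) l2(2) ne12 mvd(1-4) mvd(5,6)] l(3) mvd(7)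
        unfolding f_def T_def by simp
      ultimately show "y \<in> Y" unfolding Y_def using l(3) unfolding f_def by auto
    qed
    have "card Y = T i1 j1 * T i2 j2" unfolding Yeq using card_image[OF inj] cC1 cC2
      by (simp add: card_cartesian_product)
    then have "(\<Sum>y\<in>S. rt_P n x y) = 2 * real (T i1 j1) * real (T i2 j2) / real n ^ 2"
      using step1 by simp
    then show ?thesis using K_off_val[OF mv] sl unfolding S_def T_def by simp
  qed
qed


lemma lump_total:
  assumes x: "x permutes {1..n}" and n1: "1 \<le> n"
  shows "(\<Sum>y\<in>{y. y permutes {1..n}}. rt_P n x y) = 1"
proof -
  have "(\<Sum>y\<in>{y. y permutes {1..n}}. rt_P n x y) = (\<Sum>\<sigma>\<in>{y. y permutes {1..n}}. rt_Q n \<sigma>)"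
  proof (rule sum.reindex_bij_witness[where j = "\<lambda>y. y \<circ> inv x" and i = "\<lambda>\<sigma>. \<sigma> \<circ> x"])
    fix a assume "a \<in> {y. y permutes {1..n}}"
    show "a \<circ> inv x \<circ> x = a" using permutes_inv_o(2)[OF x] by (simp add: o_assoc[symmetric])
    show "a \<circ> inv x \<in> {y. y permutes {1..n}}"
      using \<open>a \<in> _\<close> permutes_compose[OF permutes_inv[OF x]] by auto
    show "rt_Q n (a \<circ> inv x) = rt_P n x a" by (simp add: rt_P_def)
  next
    fix b assume "b \<in> {y. y permutes {1..n}}"
    show "b \<circ> x \<circ> inv x = b" using permutes_inv_o(1)[OF x] by (simp add: o_assoc[symmetric])
    show "b \<circ> x \<in> {y. y permutes {1..n}}"
      using \<open>b \<in> _\<close> permutes_compose[OF x] by auto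
  qed
  also have "\<dots> = 1" using sumQ[OF n1] .
  finally show ?thesis .
qed

lemma lump_diag:
  assumes x: "x permutes {1..n}" and n1: "1 \<le> n"
  shows "(\<Sum>y\<in>{y. y permutes {1..n} \<and> table_of lam mu y = table_of lam mu x}. rt_P n x y)
       = table_K lam mu (table_of lam mu x) (table_of lam mu x)"
proof -
  define T where "T = table_of lam mu x"
  define g where "g T'' = (\<Sum>y\<in>{y. y permutes {1..n} \<and> table_of lam mu y = T''}. rt_P n x y)" for T''
  have finP: "finite {y. y permutes {1..n}}" by (rule finite_permutations) simp
  have Tin: "T \<in> tables lam mu" unfolding T_def by (rule table_in_tables[OF x])
  have t1: "1 = (\<Sum>y\<in>{y. y permutes {1..n}}. rt_P n x y)" using lump_total[OF x n1] by simp
  have t2: "(\<Sum>y\<in>{y. y permutes {1..n}}. rt_P n x y) = (\<Sum>T''\<in>tables lam mu. g T'')"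
  proof -
    have "(\<Sum>T''\<in>tables lam mu. \<Sum>y\<in>{y. y \<in> {y. y permutes {1..n}} \<and> table_of lam mu y = T''}. rt_P n x y)
        = (\<Sum>y\<in>{y. y permutes {1..n}}. rt_P n x y)"
      by (rule sum.group[OF finP finite_tables]) (use table_in_tables in auto)
    then show ?thesis unfolding g_def by simp
  qed
  have t3: "(\<Sum>T''\<in>tables lam mu. g T'') = g T + (\<Sum>T''\<in>tables lam mu - {T}. g T'')"
    by (rule sum.remove[OF finite_tables Tin])
  have t4: "(\<Sum>T''\<in>tables lam mu - {T}. g T'') = (\<Sum>T''\<in>tables lam mu - {T}. table_K_off lam mu T T'')"
  proof (rule sum.cong)
    fix T'' assume "T'' \<in> tables lam mu - {T}"
    then have "T'' \<noteq> table_of lam mu x" by (auto simp: T_def)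
    then show "g T'' = table_K_off lam mu T T''" unfolding g_def T_def by (rule lump_off[OF x])
  qed simp
  have "g T = 1 - (\<Sum>T''\<in>tables lam mu - {T}. table_K_off lam mu T T'')" using t1 t2 t3 t4 by linarith
  then show ?thesis unfolding g_def T_def table_K_def by simp
qed

lemma lump:
  assumes x: "x permutes {1..n}" and n1: "1 \<le> n"
  shows "(\<Sum>y\<in>{y. y permutes {1..n} \<and> table_of lam mu y = T'}. rt_P n x y)
       = table_K lam mu (table_of lam mu x) T'"
proof (cases "T' = table_of lam mu x")
  case True
  then show ?thesis using lump_diag[OF x n1] by simp
next
  case False
  then show ?thesis using lump_off[OF x False] by (simp add: table_K_def)
qed

end

theorem lemma2p1:
  fixes n :: nat and lam mu :: "nat list" and \<nu> :: "(nat \<Rightarrow> nat) \<Rightarrow> real"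
  assumes "1 \<le> n" and "is_partition n lam" and "is_partition n mu"
    and "\<forall>x. x permutes {1..n} \<longrightarrow> 0 \<le> \<nu> x"
    and "(\<Sum>x\<in>{x. x permutes {1..n}}. \<nu> x) = 1"
  shows "\<forall>(t::nat) (Ts :: (nat \<Rightarrow> nat \<Rightarrow> nat) list).
           length Ts = Suc t \<and> set Ts \<subseteq> tables lam mu \<longrightarrow>
           (\<Sum>xs\<in>{xs. length xs = Suc t \<and>
                      (\<forall>k\<le>t. xs ! k permutes {1..n} \<and> table_of lam mu (xs ! k) = Ts ! k)}.
              \<nu> (xs ! 0) * (\<Prod>k<t. rt_P n (xs ! k) (xs ! Suc k)))
           = (\<Sum>x\<in>{x. x permutes {1..n} \<and> table_of lam mu x = Ts ! 0}. \<nu> x)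
             * (\<Prod>k<t. table_K lam mu (Ts ! k) (Ts ! Suc k))"
proof (intro allI impI)
  fix t :: nat and Ts :: "(nat \<Rightarrow> nat \<Rightarrow> nat) list"
  assume tsa: "length Ts = Suc t \<and> set Ts \<subseteq> tables lam mu"
  have sl: "sum_list lam = n" and sm: "sum_list mu = n" using assms(2,3) by (auto simp: is_partition_def)
  note lumpn = lump[OF sl sm _ assms(1)]
  define A where "A t Ts = {xs. length xs = Suc t \<and>
                      (\<forall>k\<le>t. xs ! k permutes {1..n} \<and> table_of lam mu (xs ! k) = Ts ! k)}"
    for t :: nat and Ts :: "(nat \<Rightarrow> nat \<Rightarrow> nat) list"
  define L where "L t Ts = (\<Sum>xs\<in>A t Ts. \<nu> (xs ! 0) * (\<Prod>k<t. rt_P n (xs ! k) (xs ! Suc k)))"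
    for t :: nat and Ts :: "(nat \<Rightarrow> nat \<Rightarrow> nat) list"
  define R where "R t Ts = (\<Sum>x\<in>{x. x permutes {1..n} \<and> table_of lam mu x = Ts ! 0}. \<nu> x)
             * (\<Prod>k<t. table_K lam mu (Ts ! k) (Ts ! Suc k))"
    for t :: nat and Ts :: "(nat \<Rightarrow> nat \<Rightarrow> nat) list"
  have main: "length Ts = Suc t \<Longrightarrow> L t Ts = R t Ts" for t Ts
  proof (induction t arbitrary: Ts)
    case 0
    have "A 0 Ts = (\<lambda>x. [x]) ` {x. x permutes {1..n} \<and> table_of lam mu x = Ts ! 0}"
    proof (intro equalityI subsetI)
      fix xs assume "xs \<in> A 0 Ts"
      then have "length xs = 1" "xs ! 0 permutes {1..n}" "table_of lam mu (xs ! 0) = Ts ! 0"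
        unfolding A_def by auto
      moreover from this(1) have "xs = [xs ! 0]" by (cases xs) auto
      ultimately show "xs \<in> (\<lambda>x. [x]) ` {x. x permutes {1..n} \<and> table_of lam mu x = Ts ! 0}" by blast
    next
      fix xs assume "xs \<in> (\<lambda>x. [x]) ` {x. x permutes {1..n} \<and> table_of lam mu x = Ts ! 0}"
      then show "xs \<in> A 0 Ts" unfolding A_def by auto
    qed
    then show ?case unfolding L_def R_def by (simp add: sum.reindex inj_on_def)
  next
    case (Suc t)
    define Ts' where "Ts' = take (Suc t) Ts"
    define B where "B = {y. y permutes {1..n} \<and> table_of lam mu y = Ts ! Suc t}"
    have lTs': "length Ts' = Suc t" unfolding Ts'_def using Suc.prems by simp
    have nth': "Ts' ! k = Ts ! k" if "k \<le> t" for k unfolding Ts'_def using that by simp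
    have Aeq: "A (Suc t) Ts = (\<lambda>(xs, y). xs @ [y]) ` (A t Ts' \<times> B)"
    proof (intro equalityI subsetI)
      fix zs assume z: "zs \<in> A (Suc t) Ts"
      then have lz: "length zs = Suc (Suc t)" unfolding A_def by auto
      define xs where "xs = take (Suc t) zs"
      have zz: "zs = xs @ [zs ! Suc t]" unfolding xs_def using lz
        by (metis lessI take_Suc_conv_app_nth take_all order_refl)
      have "xs \<in> A t Ts'" using z lz nth' unfolding A_def xs_def by auto
      moreover have "zs ! Suc t \<in> B" using z unfolding A_def B_def by auto
      ultimately show "zs \<in> (\<lambda>(xs, y). xs @ [y]) ` (A t Ts' \<times> B)" using zz by force
    next
      fix zs assume "zs \<in> (\<lambda>(xs, y). xs @ [y]) ` (A t Ts' \<times> B)"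
      then obtain xs y where xy: "xs \<in> A t Ts'" "y \<in> B" "zs = xs @ [y]" by auto
      have lx: "length xs = Suc t" using xy unfolding A_def by auto
      have "zs ! k permutes {1..n} \<and> table_of lam mu (zs ! k) = Ts ! k" if "k \<le> Suc t" for k
      proof (cases "k = Suc t")
        case True then show ?thesis using xy lx unfolding B_def by (simp add: nth_append)
      next
        case False
        then have "k \<le> t" using that by simp
        then show ?thesis using xy lx nth' unfolding A_def by (simp add: nth_append)
      qed
      then show "zs \<in> A (Suc t) Ts" unfolding A_def using xy lx by simp
    qed
    have inj: "inj_on (\<lambda>(xs, y). xs @ [y]) (A t Ts' \<times> B)" by (auto simp: inj_on_def)
    have pr: "\<nu> ((xs @ [y]) ! 0) * (\<Prod>k<Suc t. rt_P n ((xs @ [y]) ! k) ((xs @ [y]) ! Suc k))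
        = \<nu> (xs ! 0) * (\<Prod>k<t. rt_P n (xs ! k) (xs ! Suc k)) * rt_P n (xs ! t) y"
      if "xs \<in> A t Ts'" for xs y
    proof -
      have lx: "length xs = Suc t" using that unfolding A_def by auto
      have "(\<Prod>k<t. rt_P n ((xs @ [y]) ! k) ((xs @ [y]) ! Suc k)) = (\<Prod>k<t. rt_P n (xs ! k) (xs ! Suc k))"
        by (rule prod.cong) (use lx in \<open>auto simp: nth_append\<close>)
      then show ?thesis using lx by (simp add: nth_append)
    qed
    have inner: "(\<Sum>y\<in>B. rt_P n (xs ! t) y) = table_K lam mu (Ts ! t) (Ts ! Suc t)" if "xs \<in> A t Ts'" for xs
    proof -
      have "xs ! t permutes {1..n}" "table_of lam mu (xs ! t) = Ts ! t" using that nth'[of t] unfolding A_def by auto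
      then show ?thesis unfolding B_def using lumpn by metis
    qed
    have "L (Suc t) Ts = (\<Sum>(xs,y)\<in>A t Ts' \<times> B. \<nu> (xs ! 0) * (\<Prod>k<t. rt_P n (xs ! k) (xs ! Suc k)) * rt_P n (xs ! t) y)"
      unfolding L_def Aeq
    proof (subst sum.reindex[OF inj], rule sum.cong[OF refl])
      fix p assume "p \<in> A t Ts' \<times> B"
      then obtain xs y where p: "p = (xs,y)" "xs \<in> A t Ts'" by auto
      show "((\<lambda>xs. \<nu> (xs ! 0) * (\<Prod>k<Suc t. rt_P n (xs ! k) (xs ! Suc k))) \<circ> (\<lambda>(xs, y). xs @ [y])) p =
         (case p of (xs, y) \<Rightarrow> \<nu> (xs ! 0) * (\<Prod>k<t. rt_P n (xs ! k) (xs ! Suc k)) * rt_P n (xs ! t) y)"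
        unfolding p(1) by (simp only: o_apply case_prod_conv pr[OF p(2)])
    qed
    also have "\<dots> = (\<Sum>xs\<in>A t Ts'. \<Sum>y\<in>B. \<nu> (xs ! 0) * (\<Prod>k<t. rt_P n (xs ! k) (xs ! Suc k)) * rt_P n (xs ! t) y)"
      by (rule sum.cartesian_product[symmetric])
    also have "\<dots> = (\<Sum>xs\<in>A t Ts'. \<nu> (xs ! 0) * (\<Prod>k<t. rt_P n (xs ! k) (xs ! Suc k)) * table_K lam mu (Ts ! t) (Ts ! Suc t))"
      by (rule sum.cong) (auto simp: sum_distrib_left[symmetric] inner)
    also have "\<dots> = L t Ts' * table_K lam mu (Ts ! t) (Ts ! Suc t)"
      unfolding L_def by (simp add: sum_distrib_right)
    also have "\<dots> = R t Ts' * table_K lam mu (Ts ! t) (Ts ! Suc t)" using Suc.IH[OF lTs'] by simp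
    also have "\<dots> = R (Suc t) Ts"
    proof -
      have "(\<Prod>k<t. table_K lam mu (Ts' ! k) (Ts' ! Suc k)) = (\<Prod>k<t. table_K lam mu (Ts ! k) (Ts ! Suc k))"
        by (rule prod.cong) (auto simp: nth')
      then show ?thesis unfolding R_def using nth'[of 0] by simp
    qed
    finally show ?case .
  qed
  show "(\<Sum>xs\<in>{xs. length xs = Suc t \<and>
                      (\<forall>k\<le>t. xs ! k permutes {1..n} \<and> table_of lam mu (xs ! k) = Ts ! k)}.
              \<nu> (xs ! 0) * (\<Prod>k<t. rt_P n (xs ! k) (xs ! Suc k)))
           = (\<Sum>x\<in>{x. x permutes {1..n} \<and> table_of lam mu x = Ts ! 0}. \<nu> x)
             * (\<Prod>k<t. table_K lam mu (Ts ! k) (Ts ! Suc k))"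
    using main[OF conjunct1[OF tsa]] unfolding L_def R_def A_def by simp
qed

end
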